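(* For $k=1,2$, the map $\mathcal{A}_k$ is one-to-one on $\mathfrak{M}_L^k(\mathbb{R}^d)$: if $\nu,\nu'\in\mathfrak{M}_L^k(\mathbb{R}^d)$ and $\mathcal{A}_k(\nu)=\mathcal{A}_k(\nu')$, then $\nu=\nu'$.
   Context: A Lévy measure on $\mathbb{R}^d$ is a measure $\nu$ with $\nu(\{0\})=0$ and $\int(1\wedge|x|^2)\nu(\mathrm{d}x)<\infty$; their class is $\mathfrak{M}_L^2(\mathbb{R}^d)$, and $\mathfrak{M}_L^1(\mathbb{R}^d)$ is the class of Lévy measures with $\int(1\wedge|x|)\nu(\mathrm{d}x)<\infty$. For $s>0$ set $a_1(r;s)=2\pi^{-1}(s-r^2)^{-1/2}$ for $0<r<s^{1/2}$ and $0$ otherwise; $a_2(r;s)=2\pi^{-1}(s^2-r^2)^{-1/2}$ for $0<r<s$ and $0$ otherwise. For $k=1,2$, $\mathcal{A}_k(\nu)(B)=\int_{\mathbb{R}^d\setminus\{0\}}\nu(\mathrm{d}x)\int_0^\infty a_k(r;|x|)1_B(rx/|x|)\,\mathrm{d}r$, $B$ Borel. *)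

theory Defs
  imports "HOL-Analysis.Analysis"
begin

definition levy_measure_class :: "nat \<Rightarrow> 'a::euclidean_space measure \<Rightarrow> bool" where
  "levy_measure_class k \<nu> \<longleftrightarrow>
     sets \<nu> = sets borel \<and> emeasure \<nu> {0} = 0 \<and>
     (\<integral>\<^sup>+ x. ennreal (min 1 (norm x ^ k)) \<partial>\<nu>) < \<infinity>"

definition kernel_a :: "nat \<Rightarrow> real \<Rightarrow> real \<Rightarrow> real" where
  "kernel_a k r s =
     (if k = 1 then (if 0 < r \<and> r < sqrt s then 2 / pi / sqrt (s - r\<^sup>2) else 0)
      else (if 0 < r \<and> r < s then 2 / pi / sqrt (s\<^sup>2 - r\<^sup>2) else 0))"

definition transform_A :: "nat \<Rightarrow> 'a::euclidean_space measure \<Rightarrow> 'a set \<Rightarrow> ennreal" where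
  "transform_A k \<nu> B =
     (\<integral>\<^sup>+ x. indicator (UNIV - {0}) x *
        (\<integral>\<^sup>+ r. indicator {0<..} r * ennreal (kernel_a k r (norm x)) *
                 indicator B (r *\<^sub>R (x /\<^sub>R norm x)) \<partial>lborel) \<partial>\<nu>)"

end

theory Submission
  imports Defs
begin


lemma core_deriv:
  fixes \<tau> \<sigma> x :: real
  assumes "0 < \<tau>" "\<tau> < \<sigma>" "sqrt \<tau> < x" "x < sqrt \<sigma>"
  shows "((\<lambda>r. arcsin ((2*r\<^sup>2 - \<sigma> - \<tau>)/(\<sigma>-\<tau>)) / pi) has_real_derivative
           2/pi * x / (sqrt (\<sigma>-x\<^sup>2) * sqrt (x\<^sup>2-\<tau>))) (at x)"
proof -
  have x0: "0 < x" using assms by (meson less_trans real_sqrt_gt_zero)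
  have h1: "\<tau> < x\<^sup>2" using assms x0 by (metis abs_of_pos real_sqrt_abs real_sqrt_less_iff)
  have h2: "x\<^sup>2 < \<sigma>" using assms x0 by (metis abs_of_pos real_sqrt_abs real_sqrt_less_iff)
  define v where "v = (2*x\<^sup>2 - \<sigma> - \<tau>)/(\<sigma>-\<tau>)"
  have v1: "-1 < v" "v < 1" using h1 h2 assms by (auto simp: v_def field_simps)
  have e: "1 - v\<^sup>2 = 4*(\<sigma>-x\<^sup>2)*(x\<^sup>2-\<tau>)/(\<sigma>-\<tau>)\<^sup>2"
  proof -
    have d: "(\<sigma>-\<tau>)\<^sup>2 \<noteq> 0" using assms by simp
    have "1 - v\<^sup>2 = ((\<sigma>-\<tau>)\<^sup>2 - (2*x\<^sup>2 - \<sigma> - \<tau>)\<^sup>2)/(\<sigma>-\<tau>)\<^sup>2"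
      using d unfolding v_def power_divide by (simp add: diff_divide_distrib)
    also have "(\<sigma>-\<tau>)\<^sup>2 - (2*x\<^sup>2 - \<sigma> - \<tau>)\<^sup>2 = 4*(\<sigma>-x\<^sup>2)*(x\<^sup>2-\<tau>)"
      by (simp add: power2_eq_square algebra_simps)
    finally show ?thesis .
  qed
  have s: "sqrt (1 - v\<^sup>2) = 2 * sqrt (\<sigma>-x\<^sup>2) * sqrt (x\<^sup>2-\<tau>)/(\<sigma>-\<tau>)"
  proof -
    have "sqrt (4::real) = 2" by (rule real_sqrt_unique) auto
    then show ?thesis unfolding e real_sqrt_divide real_sqrt_mult using assms by simp
  qed
  have pos: "sqrt (\<sigma>-x\<^sup>2) > 0" "sqrt (x\<^sup>2-\<tau>) > 0" using h1 h2 by auto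
  have "((\<lambda>r. arcsin ((2*r\<^sup>2 - \<sigma> - \<tau>)/(\<sigma>-\<tau>)) / pi) has_real_derivative
           inverse (sqrt (1 - v\<^sup>2)) * ((2*(2*x))/(\<sigma>-\<tau>)) / pi) (at x)"
  proof -
    have "((\<lambda>r. (2*r\<^sup>2 - \<sigma> - \<tau>)/(\<sigma>-\<tau>)) has_real_derivative (2*(2*x))/(\<sigma>-\<tau>)) (at x)"
    proof (rule DERIV_cdivide)
      show "((\<lambda>r. 2*r\<^sup>2 - \<sigma> - \<tau>) has_real_derivative 2*(2*x)) (at x)"
        by (auto intro!: derivative_eq_intros)
    qed
    from DERIV_chain2[OF DERIV_arcsin[OF v1[unfolded v_def]] this]
    show ?thesis unfolding v_def by (rule DERIV_cdivide)
  qed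
  moreover have "inverse (sqrt (1 - v\<^sup>2)) * ((2*(2*x))/(\<sigma>-\<tau>)) / pi = 2/pi * x / (sqrt (\<sigma>-x\<^sup>2) * sqrt (x\<^sup>2-\<tau>))"
    unfolding s using pos assms by (simp add: field_simps)
  ultimately show ?thesis by simp
qed

lemma core_int_pos:
  fixes \<tau> \<sigma> :: real
  assumes "0 < \<tau>" "\<tau> < \<sigma>"
  shows "(\<integral>\<^sup>+ r. ennreal (indicator {sqrt \<tau><..<sqrt \<sigma>} r *
             (2/pi * r / (sqrt (\<sigma>-r\<^sup>2) * sqrt (r\<^sup>2-\<tau>)))) \<partial>lborel) = 1"
proof -
  define f where "f r = 2/pi * r / (sqrt (\<sigma>-r\<^sup>2) * sqrt (r\<^sup>2-\<tau>))" for r :: real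
  define F where "F r = arcsin ((2*r\<^sup>2 - \<sigma> - \<tau>)/(\<sigma>-\<tau>)) / pi" for r :: real
  have ab: "sqrt \<tau> < sqrt \<sigma>" using assms by simp
  have deriv: "DERIV F x :> f x" if "sqrt \<tau> < x" "x < sqrt \<sigma>" for x
    unfolding F_def f_def using core_deriv[OF assms that] by simp
  have x0: "0 < x" if "sqrt \<tau> < x" for x using that assms by (meson less_trans real_sqrt_gt_zero)
  have cont_F: "continuous_on {sqrt \<tau>..sqrt \<sigma>} F"
    unfolding F_def
  proof (intro continuous_intros ballI)
    fix x assume x: "x \<in> {sqrt \<tau>..sqrt \<sigma>}"
    then have "x \<ge> 0" using assms by (meson atLeastAtMost_iff order.trans real_sqrt_ge_zero less_imp_le)
    then have "\<tau> \<le> x\<^sup>2" "x\<^sup>2 \<le> \<sigma>" using x assms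
      by (metis atLeastAtMost_iff abs_of_nonneg real_sqrt_abs real_sqrt_le_iff)+
    then show "-1 \<le> (2*x\<^sup>2 - \<sigma> - \<tau>)/(\<sigma>-\<tau>) \<and> (2*x\<^sup>2 - \<sigma> - \<tau>)/(\<sigma>-\<tau>) \<le> 1"
      using assms by (auto simp: field_simps)
  qed (use assms in auto)
  have Fa: "F (sqrt \<tau>) = -1/2"
  proof -
    have "(2*(sqrt \<tau>)\<^sup>2 - \<sigma> - \<tau>)/(\<sigma>-\<tau>) = -1" using assms by (simp add: field_simps)
    then show ?thesis unfolding F_def by simp
  qed
  have Fb: "F (sqrt \<sigma>) = 1/2" unfolding F_def using assms by simp
  have fcont: "isCont f x" if "sqrt \<tau> < x" "x < sqrt \<sigma>" for x
  proof -
    have "\<tau> < x\<^sup>2" "x\<^sup>2 < \<sigma>" using that x0[OF that(1)] by (metis abs_of_pos real_sqrt_abs real_sqrt_less_iff)+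
    then show ?thesis unfolding f_def by (auto intro!: continuous_intros)
  qed
  have fnn: "0 \<le> f x" if "sqrt \<tau> < x" "x < sqrt \<sigma>" for x
  proof -
    have "\<tau> < x\<^sup>2" "x\<^sup>2 < \<sigma>" using that x0[OF that(1)] by (metis abs_of_pos real_sqrt_abs real_sqrt_less_iff)+
    then show ?thesis using x0[OF that(1)] unfolding f_def by simp
  qed
  note FTC = interval_integral_FTC_nonneg[of "ereal (sqrt \<tau>)" "ereal (sqrt \<sigma>)" F f "-1/2" "1/2"]
  have lim1: "((F \<circ> real_of_ereal) \<longlongrightarrow> -1/2) (at_right (ereal (sqrt \<tau>)))"
    unfolding ereal_tendsto_simps using continuous_on_Icc_at_rightD[OF cont_F ab] Fa by simp
  have lim2: "((F \<circ> real_of_ereal) \<longlongrightarrow> 1/2) (at_left (ereal (sqrt \<sigma>)))"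
    unfolding ereal_tendsto_simps using continuous_on_Icc_at_leftD[OF cont_F ab] Fb by simp
  have I1: "set_integrable lborel (einterval (sqrt \<tau>) (sqrt \<sigma>)) f"
   and I2: "(LBINT x=ereal (sqrt \<tau>)..ereal (sqrt \<sigma>). f x) = 1/2 - -1/2"
    using FTC ab deriv fcont fnn lim1 lim2 by auto
  have ei: "einterval (ereal (sqrt \<tau>)) (ereal (sqrt \<sigma>)) = {sqrt \<tau><..<sqrt \<sigma>}"
    by (auto simp: einterval_def)
  have "(\<integral>\<^sup>+ r. ennreal (indicator {sqrt \<tau><..<sqrt \<sigma>} r * f r) \<partial>lborel)
      = ennreal (LINT r|lborel. indicator {sqrt \<tau><..<sqrt \<sigma>} r * f r)"
    using I1 unfolding ei set_integrable_def
    by (intro nn_integral_eq_integral) (auto simp: indicator_def fnn)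
  also have "(LINT r|lborel. indicator {sqrt \<tau><..<sqrt \<sigma>} r * f r) = 1"
    using I2 ab unfolding interval_lebesgue_integral_def set_lebesgue_integral_def ei by simp
  finally show ?thesis unfolding f_def by simp
qed

definition sk :: "nat \<Rightarrow> real \<Rightarrow> real" where
  "sk k s = (if k = 1 then s else s\<^sup>2)"

definition ww :: "real \<Rightarrow> real \<Rightarrow> real" where
  "ww \<tau> r = (if \<tau> < r\<^sup>2 then r / sqrt (r\<^sup>2 - \<tau>) else 0)"

lemma sk_pos: "0 < s \<Longrightarrow> 0 < sk k s" by (simp add: sk_def)

lemma sk_less: "0 < t \<Longrightarrow> 0 < s \<Longrightarrow> sk k t < sk k s \<longleftrightarrow> t < s"
  by (auto simp: sk_def power_strict_mono dest: power_less_imp_less_base)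

lemma sq_less_iff: "0 < (r::real) \<Longrightarrow> r\<^sup>2 < s \<longleftrightarrow> r < sqrt s"
  by (metis abs_of_pos real_sqrt_abs real_sqrt_less_iff)

lemma sq_less_iff2: "0 < (r::real) \<Longrightarrow> 0 \<le> t \<Longrightarrow> t < r\<^sup>2 \<longleftrightarrow> sqrt t < r"
  by (metis abs_of_pos real_sqrt_abs real_sqrt_less_iff)

lemma kernel_alt:
  assumes "0 < r" "0 < s"
  shows "kernel_a k r s = (if r\<^sup>2 < sk k s then 2/pi/sqrt (sk k s - r\<^sup>2) else 0)"
proof (cases "k = 1")
  case True then show ?thesis using assms by (simp add: kernel_a_def sk_def sq_less_iff)
next
  case False
  have "r < s \<longleftrightarrow> r\<^sup>2 < s\<^sup>2" using assms by (auto simp: power_strict_mono dest: power_less_imp_less_base)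
  then show ?thesis using False assms by (simp add: kernel_a_def sk_def)
qed

lemma core_int:
  assumes "0 < t" "0 < s"
  shows "(\<integral>\<^sup>+ r. indicator {0<..} r * ennreal (kernel_a k r s) * ennreal (ww (sk k t) r) \<partial>lborel)
     = (if t < s then 1 else 0)"
proof -
  define \<tau> where "\<tau> = sk k t"
  define \<sigma> where "\<sigma> = sk k s"
  have tp: "0 < \<tau>" "0 < \<sigma>" using assms by (simp_all add: \<tau>_def \<sigma>_def sk_pos)
  have eq: "indicator {0<..} r * ennreal (kernel_a k r s) * ennreal (ww \<tau> r) =
     ennreal (indicator {sqrt \<tau><..<sqrt \<sigma>} r * (2/pi * r / (sqrt (\<sigma>-r\<^sup>2) * sqrt (r\<^sup>2-\<tau>))))" for r
  proof (cases "0 < r")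
    case False
    then have "\<not> sqrt \<tau> < r" using tp by (meson less_trans real_sqrt_gt_zero)
    then show ?thesis using False by (simp add: indicator_def)
  next
    case True
    show ?thesis
    proof (cases "sqrt \<tau> < r \<and> r < sqrt \<sigma>")
      case c: True
      then have "\<tau> < r\<^sup>2" "r\<^sup>2 < \<sigma>" using True tp by (simp_all add: sq_less_iff sq_less_iff2)
      then show ?thesis using True c assms
        by (simp add: kernel_alt ww_def \<sigma>_def ennreal_mult'[symmetric] indicator_def)
    next
      case c: False
      then have "\<not> (\<tau> < r\<^sup>2 \<and> r\<^sup>2 < \<sigma>)" using True tp by (simp_all add: sq_less_iff sq_less_iff2)
      then show ?thesis using True c assms
        by (auto simp add: kernel_alt ww_def \<sigma>_def indicator_def)
    qed
  qed
  show ?thesis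
  proof (cases "t < s")
    case True
    then have "\<tau> < \<sigma>" using assms by (simp add: \<tau>_def \<sigma>_def sk_less)
    then show ?thesis unfolding \<tau>_def[symmetric] eq using core_int_pos[of \<tau> \<sigma>] tp True by simp
  next
    case False
    then have "\<not> \<tau> < \<sigma>" using assms by (simp add: \<tau>_def \<sigma>_def sk_less)
    then have "{sqrt \<tau><..<sqrt \<sigma>} = {}" by auto
    then show ?thesis unfolding \<tau>_def[symmetric] eq using False by simp
  qed
qed



definition QQ :: "'a::euclidean_space set \<Rightarrow> real \<Rightarrow> 'a set" where
  "QQ S t = {x. x /\<^sub>R norm x \<in> S \<and> (x = 0 \<or> t < norm x)}"

definition EE :: "'a::euclidean_space set set" where
  "EE = {QQ S t | S t. S \<in> sets borel \<and> 0 < t}"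

lemma QQ_borel[measurable]:
  assumes [measurable]: "S \<in> sets borel" shows "QQ S t \<in> sets borel"
proof -
  have "QQ S t = {x. x /\<^sub>R norm x \<in> S \<and> (norm x = 0 \<or> t < norm x)}" by (simp add: QQ_def)
  also have "\<dots> \<in> sets borel" by measurable
  finally show ?thesis .
qed

lemma EE_borel: "EE \<subseteq> sets borel"
  unfolding EE_def using QQ_borel by blast

lemma gen: "sets (borel :: 'a::euclidean_space measure) = sigma_sets UNIV (EE :: 'a set set)"
proof
  show "sigma_sets UNIV EE \<subseteq> sets (borel :: 'a measure)"
    using sets.sigma_sets_subset[OF EE_borel] by simp
next
  define M where "M = sigma (UNIV :: 'a set) EE"
  have sM: "sets M = sigma_sets UNIV EE" unfolding M_def by (rule sets_measure_of) simp
  have spM: "space M = UNIV" unfolding M_def by (rule space_measure_of) simp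
  have Q: "QQ S t \<in> sets M" if "S \<in> sets borel" "0 < t" for S t
    unfolding sM EE_def using that by (intro sigma_sets.Basic) blast
  have z: "{0::'a} \<in> sets M"
  proof -
    have "{0::'a} = (\<Inter>i\<in>UNIV. QQ UNIV (real (Suc i)))"
    proof (rule set_eqI)
      fix x :: 'a
      show "x \<in> {0} \<longleftrightarrow> x \<in> (\<Inter>i\<in>UNIV. QQ UNIV (real (Suc i)))"
      proof
        assume "x \<in> (\<Inter>i\<in>UNIV. QQ UNIV (real (Suc i)))"
        then have h: "\<forall>i. x = 0 \<or> real (Suc i) < norm x" by (auto simp: QQ_def)
        obtain n where n: "norm x < real n" using reals_Archimedean2 by blast
        show "x \<in> {0}" using h[rule_format, of n] n by auto
      qed (auto simp: QQ_def)
    qed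
    also have "\<dots> \<in> sets M" using Q by (intro sets.countable_INT) auto
    finally show ?thesis .
  qed
  have pos: "{x::'a. x \<noteq> 0 \<and> t < norm x} = (\<Union>i. QQ UNIV (t + 1 / real (Suc i))) - {0}" if "0 \<le> t" for t
  proof (auto simp: QQ_def)
    fix x :: 'a assume "t < norm x"
    then obtain n where "1 / real (Suc n) < norm x - t"
      by (metis diff_gt_0_iff_gt nat_approx_posE)
    then show "\<exists>i. t + 1 / (1 + real i) < norm x" by (auto intro!: exI[of _ n])
  next
    fix x :: 'a and i assume "t + 1 / (1 + real i) < norm x"
    moreover have "0 < 1 / (1 + real i)" by simp
    ultimately show "t < norm x" by linarith
  qed
  have norm_meas: "(norm :: 'a \<Rightarrow> real) \<in> borel_measurable M"
    unfolding borel_measurable_iff_greater spM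
  proof
    fix a :: real
    show "{w \<in> UNIV. a < norm w} \<in> sets M"
    proof (cases "a < 0")
      case True
      then have "{w \<in> UNIV. a < norm (w::'a)} = space M" using spM by (auto intro: less_le_trans)
      then show ?thesis by simp
    next
      case False
      then have "{w \<in> UNIV. a < norm (w::'a)} = (\<Union>i. QQ UNIV (a + 1 / real (Suc i))) - {0}"
      proof -
        have "{w \<in> UNIV. a < norm (w::'a)} = {x::'a. x \<noteq> 0 \<and> a < norm x}"
          using False by (auto simp: not_less)
        then show ?thesis using pos[of a] False by simp
      qed
      also have "\<dots> \<in> sets M"
      proof (intro sets.Diff sets.countable_UN z image_subsetI)
        fix i :: nat
        have "0 < a + 1 / real (Suc i)" using False by (intro add_nonneg_pos) auto
        then show "QQ UNIV (a + 1 / real (Suc i)) \<in> sets M" by (intro Q) auto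
      qed
      finally show ?thesis .
    qed
  qed
  have u_meas: "(\<lambda>x::'a. x /\<^sub>R norm x) \<in> M \<rightarrow>\<^sub>M borel"
  proof (rule measurableI)
    fix S :: "'a set" assume S: "S \<in> sets borel"
    have "(\<lambda>x::'a. x /\<^sub>R norm x) -` S \<inter> space M = (\<Union>i. QQ S (1 / real (Suc i)))"
    proof (rule set_eqI)
      fix x :: 'a
      show "x \<in> (\<lambda>x::'a. x /\<^sub>R norm x) -` S \<inter> space M \<longleftrightarrow> x \<in> (\<Union>i. QQ S (1 / real (Suc i)))"
      proof
        assume x: "x \<in> (\<lambda>x::'a. x /\<^sub>R norm x) -` S \<inter> space M"
        show "x \<in> (\<Union>i. QQ S (1 / real (Suc i)))"
        proof (cases "x = 0")
          case False
          then obtain n where "1 / real (Suc n) < norm x"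
            by (metis nat_approx_posE zero_less_norm_iff)
          then show ?thesis using x by (auto simp: QQ_def)
        qed (use x in \<open>auto simp: QQ_def\<close>)
      qed (auto simp: QQ_def spM)
    qed
    also have "\<dots> \<in> sets M" using Q S by (intro sets.countable_UN) auto
    finally show "(\<lambda>x::'a. x /\<^sub>R norm x) -` S \<inter> space M \<in> sets M" .
  qed simp
  have id_meas: "(\<lambda>x::'a. x) \<in> borel_measurable M"
  proof -
    have "(\<lambda>x::'a. norm x *\<^sub>R (x /\<^sub>R norm x)) \<in> borel_measurable M"
      by (rule borel_measurable_scaleR[OF norm_meas u_meas])
    moreover have "(\<lambda>x::'a. norm x *\<^sub>R (x /\<^sub>R norm x)) = (\<lambda>x. x)"
    proof
      fix x :: 'a show "norm x *\<^sub>R (x /\<^sub>R norm x) = x" by (cases "x = 0") auto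
    qed
    ultimately show ?thesis by simp
  qed
  show "sets (borel :: 'a measure) \<subseteq> sigma_sets UNIV EE"
  proof
    fix B :: "'a set" assume "B \<in> sets borel"
    from measurable_sets[OF id_meas this] show "B \<in> sigma_sets UNIV EE"
      by (simp add: spM sM)
  qed
qed



definition FF :: "nat \<Rightarrow> 'a::euclidean_space \<times> real \<Rightarrow> ennreal" where
  "FF k z = indicator (UNIV - {0}) (fst z) * (indicator {0<..} (snd z) * ennreal (kernel_a k (snd z) (norm (fst z))))"

definition TT :: "'a::euclidean_space \<times> real \<Rightarrow> 'a" where
  "TT z = snd z *\<^sub>R (fst z /\<^sub>R norm (fst z))"

lemma kernel_meas2[measurable]:
  assumes [measurable]: "f \<in> borel_measurable M" "g \<in> borel_measurable M"
  shows "(\<lambda>x. kernel_a k (f x) (g x)) \<in> borel_measurable M"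
  unfolding kernel_a_def by measurable

lemma FF_meas[measurable]: "FF k \<in> borel_measurable (borel \<Otimes>\<^sub>M borel)"
  unfolding FF_def by measurable

lemma TT_meas[measurable]: "TT \<in> borel_measurable (borel \<Otimes>\<^sub>M borel)"
  unfolding TT_def by measurable

definition MM :: "nat \<Rightarrow> 'a::euclidean_space measure \<Rightarrow> 'a measure" where
  "MM k \<nu> = distr (density (\<nu> \<Otimes>\<^sub>M lborel) (FF k)) borel TT"

lemma phi:
  fixes \<nu> :: "'a::euclidean_space measure"
  assumes sets: "sets \<nu> = sets borel" and g[measurable]: "g \<in> borel_measurable borel"
  shows "(\<integral>\<^sup>+ y. g y \<partial>MM k \<nu>) = (\<integral>\<^sup>+ x. indicator (UNIV - {0}) x *
        (\<integral>\<^sup>+ r. indicator {0<..} r * ennreal (kernel_a k r (norm x)) * g (r *\<^sub>R (x /\<^sub>R norm x)) \<partial>lborel) \<partial>\<nu>)"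
proof -
  have S: "sets (\<nu> \<Otimes>\<^sub>M lborel) = sets (borel \<Otimes>\<^sub>M borel)"
    by (rule sets_pair_measure_cong) (auto simp: sets)
  have [measurable]: "FF k \<in> borel_measurable (\<nu> \<Otimes>\<^sub>M lborel)" "TT \<in> borel_measurable (\<nu> \<Otimes>\<^sub>M lborel)"
    by (simp_all add: measurable_cong_sets[OF S refl])
  have [measurable]: "(\<lambda>z. FF k z * g (TT z)) \<in> borel_measurable (\<nu> \<Otimes>\<^sub>M lborel)"
    by measurable
  have "(\<integral>\<^sup>+ y. g y \<partial>MM k \<nu>) = (\<integral>\<^sup>+ z. g (TT z) \<partial>density (\<nu> \<Otimes>\<^sub>M lborel) (FF k))"
    unfolding MM_def by (subst nn_integral_distr) auto
  also have "\<dots> = (\<integral>\<^sup>+ z. FF k z * g (TT z) \<partial>(\<nu> \<Otimes>\<^sub>M lborel))"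
    by (subst nn_integral_density) auto
  also have "\<dots> = (\<integral>\<^sup>+ x. \<integral>\<^sup>+ r. FF k (x,r) * g (TT (x,r)) \<partial>lborel \<partial>\<nu>)"
    by (subst lborel.nn_integral_fst[symmetric]) auto
  also have "\<dots> = (\<integral>\<^sup>+ x. indicator (UNIV - {0}) x *
        (\<integral>\<^sup>+ r. indicator {0<..} r * ennreal (kernel_a k r (norm x)) * g (r *\<^sub>R (x /\<^sub>R norm x)) \<partial>lborel) \<partial>\<nu>)"
    by (rule nn_integral_cong, subst nn_integral_cmult[symmetric])
       (auto simp: FF_def TT_def mult.assoc intro!: nn_integral_cong)
  finally show ?thesis .
qed

lemma ww_meas[measurable]: "ww \<tau> \<in> borel_measurable borel"
  unfolding ww_def by measurable

lemma MM_sets: "sets (MM k \<nu>) = sets borel" by (simp add: MM_def)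

lemma emeasure_MM:
  fixes \<nu> :: "'a::euclidean_space measure"
  assumes "sets \<nu> = sets borel" "B \<in> sets borel"
  shows "emeasure (MM k \<nu>) B = transform_A k \<nu> B"
proof -
  have "emeasure (MM k \<nu>) B = (\<integral>\<^sup>+ y. indicator B y \<partial>MM k \<nu>)"
    using assms by (simp add: MM_sets)
  also have "\<dots> = transform_A k \<nu> B"
    unfolding transform_A_def using assms by (subst phi) auto
  finally show ?thesis .
qed

lemma cone_int:
  fixes \<nu> :: "'a::euclidean_space measure"
  assumes sets: "sets \<nu> = sets borel" and S: "S \<in> sets borel" and t: "0 < t"
  shows "(\<integral>\<^sup>+ y. indicator S (y /\<^sub>R norm y) * ennreal (ww (sk k t) (norm y)) \<partial>MM k \<nu>)
     = emeasure \<nu> {x. x \<noteq> 0 \<and> x /\<^sub>R norm x \<in> S \<and> t < norm x}"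
proof -
  have [measurable]: "S \<in> sets borel" by fact
  define C where "C = {x::'a. x \<noteq> 0 \<and> x /\<^sub>R norm x \<in> S \<and> t < norm x}"
  have C[measurable]: "C \<in> sets borel" unfolding C_def by measurable
  have inner: "indicator (UNIV - {0}) x *
        (\<integral>\<^sup>+ r. indicator {0<..} r * ennreal (kernel_a k r (norm x)) *
           (indicator S ((r *\<^sub>R (x /\<^sub>R norm x)) /\<^sub>R norm (r *\<^sub>R (x /\<^sub>R norm x))) *
            ennreal (ww (sk k t) (norm (r *\<^sub>R (x /\<^sub>R norm x))))) \<partial>lborel)
      = indicator C x" for x :: 'a
  proof (cases "x = 0")
    case True then show ?thesis by (simp add: C_def)
  next
    case False
    have "(\<integral>\<^sup>+ r. indicator {0<..} r * ennreal (kernel_a k r (norm x)) *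
           (indicator S ((r *\<^sub>R (x /\<^sub>R norm x)) /\<^sub>R norm (r *\<^sub>R (x /\<^sub>R norm x))) *
            ennreal (ww (sk k t) (norm (r *\<^sub>R (x /\<^sub>R norm x))))) \<partial>lborel)
       = (\<integral>\<^sup>+ r. indicator S (x /\<^sub>R norm x) * (indicator {0<..} r * ennreal (kernel_a k r (norm x)) *
            ennreal (ww (sk k t) r)) \<partial>lborel)"
    proof (rule nn_integral_cong)
      fix r :: real
      show "indicator {0<..} r * ennreal (kernel_a k r (norm x)) *
           (indicator S ((r *\<^sub>R (x /\<^sub>R norm x)) /\<^sub>R norm (r *\<^sub>R (x /\<^sub>R norm x))) *
            ennreal (ww (sk k t) (norm (r *\<^sub>R (x /\<^sub>R norm x)))))
          = indicator S (x /\<^sub>R norm x) * (indicator {0<..} r * ennreal (kernel_a k r (norm x)) *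
            ennreal (ww (sk k t) r))"
      proof (cases "0 < r")
        case True
        have n: "norm (r *\<^sub>R (x /\<^sub>R norm x)) = r" using True False by simp
        have u: "(r *\<^sub>R (x /\<^sub>R norm x)) /\<^sub>R r = x /\<^sub>R norm x" using True by simp
        show ?thesis unfolding n u by (simp add: mult_ac)
      qed (simp add: indicator_def)
    qed
    also have "\<dots> = indicator S (x /\<^sub>R norm x) * (\<integral>\<^sup>+ r. indicator {0<..} r * ennreal (kernel_a k r (norm x)) *
            ennreal (ww (sk k t) r) \<partial>lborel)"
      by (rule nn_integral_cmult) measurable
    also have "\<dots> = indicator S (x /\<^sub>R norm x) * (if t < norm x then 1 else 0)"
      using False t by (simp add: core_int)
    finally show ?thesis using False by (simp add: C_def indicator_def)
  qed
  have "(\<integral>\<^sup>+ y. indicator S (y /\<^sub>R norm y) * ennreal (ww (sk k t) (norm y)) \<partial>MM k \<nu>)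
      = (\<integral>\<^sup>+ x. indicator C x \<partial>\<nu>)"
    by (subst phi[OF sets]) (measurable, simp only: inner)
  also have "\<dots> = emeasure \<nu> C" using sets C by simp
  finally show ?thesis unfolding C_def .
qed


lemma levy_fin:
  fixes \<nu> :: "'a::euclidean_space measure"
  assumes L: "levy_measure_class k \<nu>" and t: "0 < t"
  shows "emeasure \<nu> (QQ UNIV t) \<noteq> \<infinity>"
proof -
  have sets: "sets \<nu> = sets borel" and z: "emeasure \<nu> {0} = 0"
    and fin: "(\<integral>\<^sup>+ x. ennreal (min 1 (norm x ^ k)) \<partial>\<nu>) < \<infinity>"
    using L by (auto simp: levy_measure_class_def)
  define D where "D = {x::'a. t < norm x}"
  have D[measurable]: "D \<in> sets borel" unfolding D_def by measurable
  define c where "c = min 1 (t ^ k)"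
  have c: "0 < c" using t by (simp add: c_def)
  have "ennreal c * emeasure \<nu> D = (\<integral>\<^sup>+ x. ennreal c * indicator D x \<partial>\<nu>)"
    using sets D by (subst nn_integral_cmult_indicator) auto
  also have "\<dots> \<le> (\<integral>\<^sup>+ x. ennreal (min 1 (norm x ^ k)) \<partial>\<nu>)"
  proof (rule nn_integral_mono)
    fix x :: 'a
    show "ennreal c * indicator D x \<le> ennreal (min 1 (norm x ^ k))"
    proof (cases "x \<in> D")
      case True
      then have "t ^ k \<le> norm x ^ k" using t by (intro power_mono) (auto simp: D_def)
      then have "c \<le> min 1 (norm x ^ k)" by (auto simp: c_def)
      then show ?thesis using True by simp
    qed simp
  qed
  finally have "ennreal c * emeasure \<nu> D < \<infinity>" using fin by (meson le_less_trans)
  then have DD: "emeasure \<nu> D < \<infinity>" using c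
    by (auto simp: ennreal_mult_less_top)
  have "QQ UNIV t \<subseteq> {0} \<union> D" by (auto simp: QQ_def D_def)
  then have "emeasure \<nu> (QQ UNIV t) \<le> emeasure \<nu> ({0} \<union> D)"
    using sets D by (intro emeasure_mono) auto
  also have "\<dots> \<le> emeasure \<nu> {0} + emeasure \<nu> D"
    using sets D by (intro emeasure_subadditive) auto
  also have "\<dots> < \<infinity>" using z DD by simp
  finally show ?thesis by simp
qed

lemma QQ_cone:
  fixes \<nu> :: "'a::euclidean_space measure"
  assumes sets: "sets \<nu> = sets borel" and z: "emeasure \<nu> {0} = 0" and S: "S \<in> sets borel"
  shows "emeasure \<nu> (QQ S t) = emeasure \<nu> {x. x \<noteq> 0 \<and> x /\<^sub>R norm x \<in> S \<and> t < norm x}"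
proof -
  have "{x. x \<noteq> 0 \<and> x /\<^sub>R norm x \<in> S \<and> t < norm x} = QQ S t - {0}" by (auto simp: QQ_def)
  moreover have "emeasure \<nu> (QQ S t - {0}) = emeasure \<nu> (QQ S t)"
    using sets z S by (intro emeasure_Diff_null_set) (auto simp: null_sets_def)
  ultimately show ?thesis by simp
qed


lemma MMeq_lem:
  fixes \<nu> \<nu>' :: "'a::euclidean_space measure"
  assumes s1: "sets \<nu> = sets borel" and s2: "sets \<nu>' = sets borel"
    and eq: "\<forall>B \<in> sets borel. transform_A k \<nu> B = transform_A k \<nu>' B"
  shows "MM k \<nu> = MM k \<nu>'"
proof (rule measure_eqI)
  show "sets (MM k \<nu>) = sets (MM k \<nu>')" by (simp add: MM_sets)
  fix B assume "B \<in> sets (MM k \<nu>)"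
  then have B: "B \<in> sets borel" by (simp add: MM_sets)
  have "emeasure (MM k \<nu>) B = transform_A k \<nu> B" by (rule emeasure_MM[OF s1 B])
  also have "\<dots> = transform_A k \<nu>' B" using eq B by blast
  also have "\<dots> = emeasure (MM k \<nu>') B" by (rule emeasure_MM[OF s2 B, symmetric])
  finally show "emeasure (MM k \<nu>) B = emeasure (MM k \<nu>') B" .
qed

lemma Int_stable_EE: "Int_stable (EE :: 'a::euclidean_space set set)"
proof (rule Int_stableI)
  fix a b :: "'a set" assume "a \<in> EE" "b \<in> EE"
  then obtain S t S' t' where a: "a = QQ S t" "S \<in> sets borel" "0 < t"
    and b: "b = QQ S' t'" "S' \<in> sets borel" "0 < t'"
    unfolding EE_def by blast
  have "a \<inter> b = QQ (S \<inter> S') (max t t')" unfolding a b by (auto simp: QQ_def)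
  moreover have "S \<inter> S' \<in> sets borel" "0 < max t t'" using a b by auto
  ultimately show "a \<inter> b \<in> EE" unfolding EE_def
    by (intro CollectI exI[of _ "S \<inter> S'"] exI[of _ "max t t'"] conjI)
qed

lemma cover_EE: "(\<Union>i. QQ UNIV (1 / real (Suc i))) = (UNIV :: 'a::euclidean_space set)"
proof (rule set_eqI)
  fix x :: 'a
  show "x \<in> (\<Union>i. QQ UNIV (1 / real (Suc i))) \<longleftrightarrow> x \<in> UNIV"
  proof (cases "x = 0")
    case False
    then obtain n where "1 / real (Suc n) < norm x"
      by (metis nat_approx_posE zero_less_norm_iff)
    then show ?thesis by (auto simp: QQ_def)
  qed (auto simp: QQ_def)
qed

lemma range_EE: "range (\<lambda>i. QQ UNIV (1 / real (Suc i))) \<subseteq> (EE :: 'a::euclidean_space set set)"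
proof (rule image_subsetI)
  fix i :: nat
  have "UNIV \<in> sets (borel :: 'a measure)" "0 < 1 / real (Suc i)" by auto
  then show "QQ UNIV (1 / real (Suc i)) \<in> EE" unfolding EE_def
    by (intro CollectI exI[of _ UNIV] exI[of _ "1 / real (Suc i)"] conjI refl) auto
qed

theorem theorem2p9:
  fixes \<nu> \<nu>' :: "'a::euclidean_space measure" and k :: nat
  assumes "k = 1 \<or> k = 2"
    and "levy_measure_class k \<nu>" and "levy_measure_class k \<nu>'"
    and "\<forall>B \<in> sets borel. transform_A k \<nu> B = transform_A k \<nu>' B"
  shows "\<nu> = \<nu>'"
proof -
  have s1: "sets \<nu> = sets borel" and z1: "emeasure \<nu> {0} = 0"
    using assms(2) by (auto simp: levy_measure_class_def)
  have s2: "sets \<nu>' = sets borel" and z2: "emeasure \<nu>' {0} = 0"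
    using assms(3) by (auto simp: levy_measure_class_def)
  have MMeq: "MM k \<nu> = MM k \<nu>'" by (rule MMeq_lem[OF s1 s2 assms(4)])
  have eqE: "emeasure \<nu> X = emeasure \<nu>' X" if XE: "X \<in> EE" for X
  proof -
    obtain S t where X: "X = QQ S t" and S: "S \<in> sets borel" and t: "0 < t"
      using XE unfolding EE_def by blast
    have "emeasure \<nu> X = emeasure \<nu> {x. x \<noteq> 0 \<and> x /\<^sub>R norm x \<in> S \<and> t < norm x}"
      unfolding X by (rule QQ_cone[OF s1 z1 S])
    also have "\<dots> = (\<integral>\<^sup>+ y. indicator S (y /\<^sub>R norm y) * ennreal (ww (sk k t) (norm y)) \<partial>MM k \<nu>)"
      by (rule cone_int[OF s1 S t, symmetric])
    also have "\<dots> = (\<integral>\<^sup>+ y. indicator S (y /\<^sub>R norm y) * ennreal (ww (sk k t) (norm y)) \<partial>MM k \<nu>')"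
      by (simp only: MMeq)
    also have "\<dots> = emeasure \<nu>' {x. x \<noteq> 0 \<and> x /\<^sub>R norm x \<in> S \<and> t < norm x}"
      by (rule cone_int[OF s2 S t])
    also have "\<dots> = emeasure \<nu>' X"
      unfolding X by (rule QQ_cone[OF s2 z2 S, symmetric])
    finally show ?thesis .
  qed
  have g1: "sets \<nu> = sigma_sets UNIV (EE :: 'a set set)" unfolding s1 by (rule gen)
  have g2: "sets \<nu>' = sigma_sets UNIV (EE :: 'a set set)" unfolding s2 by (rule gen)
  have fin: "emeasure \<nu> (QQ UNIV (1 / real (Suc i))) \<noteq> \<infinity>" for i
    by (rule levy_fin[OF assms(2)]) simp
  show ?thesis
    by (rule measure_eqI_generator_eq[OF Int_stable_EE _ eqE g1 g2 range_EE cover_EE fin]) simp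
qed


end
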